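(* Let $H$ be a Heyting algebra, let $I$ be a finite set and let $\Pi=\{(a_i,b_i)\mid i\in I\}$ be a family of pairs of elements of $H$. Define $\phi_\Pi:H\to H$ by $\phi_\Pi(x)=\bigvee_{i\in I}((x\to a_i)\to b_i)$. Then $\phi_\Pi$ converges to its least fixed point in $3$ steps, i.e. $\phi_\Pi^4(\bot)=\phi_\Pi^3(\bot)$, so $\phi_\Pi^3(\bot)$ is the least fixed point of $\phi_\Pi$.
   Context: $\phi_\Pi^n$ denotes the $n$-fold composite of $\phi_\Pi$ with itself; $\bot$ is the least element of $H$. *)

theory Defs
  imports Main
begin

class heyting_algebra = bounded_lattice +
  fixes himp :: "'a \<Rightarrow> 'a \<Rightarrow> 'a"
  assumes himp_residuation: "inf c a \<le> b \<longleftrightarrow> c \<le> himp a b"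

definition fin_join :: "'i set \<Rightarrow> ('i \<Rightarrow> 'a::bounded_semilattice_sup_bot) \<Rightarrow> 'a" where
  "fin_join I f = Finite_Set.fold (\<lambda>i acc. sup (f i) acc) bot I"

definition phi :: "'i set \<Rightarrow> ('i \<Rightarrow> 'a::heyting_algebra) \<Rightarrow> ('i \<Rightarrow> 'a) \<Rightarrow> 'a \<Rightarrow> 'a" where
  "phi I a b x = fin_join I (\<lambda>i. himp (himp x (a i)) (b i))"

end

theory Submission
  imports Defs
begin

lemma cfc: "comp_fun_commute_on UNIV (\<lambda>i acc. sup (f i) acc :: 'a::bounded_semilattice_sup_bot)"
  by unfold_locales (auto simp: fun_eq_iff sup_left_commute)

lemma fin_join_insert:
  "finite F \<Longrightarrow> x \<notin> F \<Longrightarrow> fin_join (insert x F) f = sup (f x) (fin_join F f)"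
  unfolding fin_join_def by (rule comp_fun_commute_on.fold_insert[OF cfc]) auto

lemma fin_join_ub: "finite I \<Longrightarrow> i \<in> I \<Longrightarrow> f i \<le> fin_join I f"
proof (induction I rule: finite_induct)
  case empty then show ?case by simp
next
  case (insert x F) then show ?case
    by (auto simp: fin_join_insert intro: le_supI2)
qed

lemma fin_join_least: "finite I \<Longrightarrow> (\<forall>i\<in>I. f i \<le> y) \<Longrightarrow> fin_join I f \<le> y"
proof (induction I rule: finite_induct)
  case empty then show ?case by (simp add: fin_join_def)
next
  case (insert x F) then show ?case
    by (auto simp: fin_join_insert)
qed

context heyting_algebra
begin

lemma le_himp_iff: "c \<le> himp a b \<longleftrightarrow> inf c a \<le> b"
  using himp_residuation by blast

lemma himp_mp: "inf x (himp x y) \<le> y"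
  using himp_residuation[of "himp x y" x y] by (simp add: inf_commute)

lemma himp_mp': "inf (himp x y) x \<le> y"
  using himp_mp[of x y] by (simp add: inf_commute)

lemma himp_anti: "x \<le> y \<Longrightarrow> himp y a \<le> himp x a"
  unfolding le_himp_iff
  by (rule order_trans[OF inf_mono[OF order.refl] himp_mp'])

lemma le_himp_cons: "b \<le> himp x b"
  unfolding le_himp_iff by simp

end

lemma phi_mono:
  assumes "finite I" "x \<le> y"
  shows "phi I a b x \<le> phi I a b y"
  unfolding phi_def
  using assms
  by (auto intro!: fin_join_least order_trans[OF _ fin_join_ub] himp_anti)

lemma b_le_phi:
  assumes "finite I" "i \<in> I"
  shows "b i \<le> phi I a b y"
  unfolding phi_def
  using le_himp_cons fin_join_ub[OF assms, of "\<lambda>i. himp (himp y (a i)) (b i)"]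
  by (rule order_trans)

lemma key:
  fixes a b :: "'i \<Rightarrow> 'h::heyting_algebra"
  assumes fin: "finite I" and B: "\<forall>i\<in>I. b i \<le> B"
  defines "x2 \<equiv> phi I a b B"
  defines "x3 \<equiv> phi I a b x2"
  shows "phi I a b x3 \<le> x3"
proof -
  have x3u: "\<And>i. i \<in> I \<Longrightarrow> himp (himp x2 (a i)) (b i) \<le> x3"
    unfolding x3_def phi_def using fin by (rule fin_join_ub)
  have x2u: "\<And>k. k \<in> I \<Longrightarrow> himp (himp B (a k)) (b k) \<le> x2"
    unfolding x2_def phi_def using fin by (rule fin_join_ub)
  have main: "himp (himp x3 (a i)) (b i) \<le> x3" if i: "i \<in> I" for i
  proof -
    define h where "h = himp (himp x3 (a i)) (b i)"
    define d where "d = himp x2 (a i)"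
    have F1: "inf d x2 \<le> a i" unfolding d_def by (rule himp_mp')
    have F2: "inf d x2 \<le> himp x3 (a i)" unfolding le_himp_iff
      by (rule order_trans[OF inf_le1 F1])
    have Fh: "inf h (himp x3 (a i)) \<le> b i" unfolding h_def by (rule himp_mp')
    have F3: "inf (inf h d) x2 \<le> b i"
    proof -
      have "inf (inf h d) x2 = inf h (inf d x2)" by (rule inf_assoc)
      also have "\<dots> \<le> inf h (himp x3 (a i))" by (rule inf_mono[OF order.refl F2])
      also have "\<dots> \<le> b i" by (rule Fh)
      finally show ?thesis .
    qed
    have F3B: "inf (inf h d) x2 \<le> B" using F3 B i by (meson order_trans)
    have Gk: "himp (himp x2 (a k)) (b k) \<le> himp (inf h d) (a i)" if k: "k \<in> I" for k
    proof -
      define c where "c = himp B (a k)"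
      define g where "g = himp (himp x2 (a k)) (b k)"
      have F4: "inf (inf (inf h d) c) x2 \<le> a k"
      proof -
        have "inf (inf (inf h d) c) x2 \<le> inf (inf h d) x2"
          by (rule inf_mono[OF inf_le1 order.refl])
        hence l1: "inf (inf (inf h d) c) x2 \<le> B" using F3B by (rule order_trans)
        have l2: "inf (inf (inf h d) c) x2 \<le> c"
          by (rule order_trans[OF inf_le1 inf_le2])
        have "inf (inf (inf h d) c) x2 \<le> inf B c" using l1 l2 by (rule le_infI)
        also have "\<dots> \<le> a k" unfolding c_def by (rule himp_mp)
        finally show ?thesis .
      qed
      have F5: "inf (inf h d) c \<le> himp x2 (a k)" unfolding le_himp_iff by (rule F4)
      have F6: "inf (inf (inf h d) g) c \<le> b k"
      proof -
        have l1: "inf (inf (inf h d) g) c \<le> g" by (rule order_trans[OF inf_le1 inf_le2])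
        have "inf (inf (inf h d) g) c \<le> inf (inf h d) c"
          by (rule inf_mono[OF inf_le1 order.refl])
        hence l2: "inf (inf (inf h d) g) c \<le> himp x2 (a k)" using F5 by (rule order_trans)
        have "inf (inf (inf h d) g) c \<le> inf g (himp x2 (a k))" using l1 l2 by (rule le_infI)
        also have "\<dots> \<le> b k" unfolding g_def by (rule himp_mp')
        finally show ?thesis .
      qed
      have F7: "inf (inf h d) g \<le> x2"
      proof -
        have "inf (inf h d) g \<le> himp c (b k)" unfolding le_himp_iff by (rule F6)
        also have "\<dots> \<le> x2" unfolding c_def by (rule x2u[OF k])
        finally show ?thesis .
      qed
      have "inf (inf h d) g \<le> d" by (rule order_trans[OF inf_le1 inf_le2])
      hence "inf (inf h d) g \<le> inf d x2" using F7 by (rule le_infI)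
      hence "inf (inf h d) g \<le> a i" using F1 by (rule order_trans)
      hence "inf g (inf h d) \<le> a i" by (simp add: inf_commute)
      thus ?thesis unfolding g_def le_himp_iff .
    qed
    have "x3 \<le> himp (inf h d) (a i)"
      unfolding x3_def phi_def by (intro fin_join_least[OF fin] ballI Gk)
    hence "inf x3 (inf h d) \<le> a i" unfolding le_himp_iff .
    hence "inf (inf h d) x3 \<le> a i" by (simp add: inf_commute)
    hence "inf h d \<le> himp x3 (a i)" unfolding le_himp_iff .
    hence "inf h d \<le> inf h (himp x3 (a i))" by (rule le_infI[OF inf_le1])
    hence "inf h d \<le> b i" using Fh by (rule order_trans)
    hence "h \<le> himp d (b i)" unfolding le_himp_iff .
    also have "\<dots> \<le> x3" unfolding d_def by (rule x3u[OF i])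
    finally show ?thesis unfolding h_def .
  qed
  show ?thesis unfolding phi_def[of I a b x3] using fin main by (intro fin_join_least) auto
qed

theorem mainTheorem2:
  fixes I :: "'i set" and a b :: "'i \<Rightarrow> 'h::heyting_algebra"
  assumes "finite I"
  shows "(phi I a b ^^ 4) bot = (phi I a b ^^ 3) bot
    \<and> phi I a b ((phi I a b ^^ 3) bot) = (phi I a b ^^ 3) bot
    \<and> (\<forall>y. phi I a b y = y \<longrightarrow> (phi I a b ^^ 3) bot \<le> y)"
proof -
  let ?P = "phi I a b"
  define B where "B = ?P bot"
  have Bb: "\<forall>i\<in>I. b i \<le> B" unfolding B_def using b_le_phi[OF assms] by blast
  have e3: "(?P ^^ 3) bot = ?P (?P B)" by (simp add: B_def numeral_3_eq_3)
  have e4: "(?P ^^ 4) bot = ?P (?P (?P B))"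
    by (simp add: B_def numeral_eq_Suc)
  have le1: "?P (?P (?P B)) \<le> ?P (?P B)" using key[OF assms Bb] .
  have m1: "B \<le> ?P B" unfolding B_def by (rule phi_mono[OF assms]) simp
  have m2: "?P B \<le> ?P (?P B)" by (rule phi_mono[OF assms m1])
  have m3: "?P (?P B) \<le> ?P (?P (?P B))" by (rule phi_mono[OF assms m2])
  have fp: "?P (?P (?P B)) = ?P (?P B)" using le1 m3 by (rule order.antisym)
  have least: "?P (?P B) \<le> y" if "?P y = y" for y
  proof -
    have "B \<le> y" unfolding B_def using phi_mono[OF assms, of bot y a b] that by simp
    hence "?P B \<le> y" using phi_mono[OF assms, of B y a b] that by simp
    thus ?thesis using phi_mono[OF assms, of "?P B" y a b] that by simp
  qed
  show ?thesis using e3 e4 fp least by simp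
qed

end
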